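(* Let $(T,(V_t)_{t\in T})$ be a lean tree-decomposition of a graph $H$ into finite parts, and root $T$ at an arbitrary node $r$. Then every rooted ray in $T$ arises from at most one end of $H$. Moreover, if a rooted ray $R$ in $T$ arises from an end $\varepsilon$ of $H$, then $\liminf_{e\in E(R)}V_e=\mathrm{Dom}(\varepsilon)$.
   Context: A tree-decomposition $(T,(V_t)_{t\in T})$ of $H$ consists of a tree $T$ and bags $V_t\subseteq V(H)$ covering all vertices and edges of $H$ such that for each vertex $v$ the nodes $t$ with $v\in V_t$ form a subtree; it is into finite parts if all bags are finite. For an edge $e=st$ of $T$, $V_e:=V_s\cap V_t$. The decomposition is lean if for every two (not necessarily distinct) nodes $s,t$ and all $Z_s\subseteq V_s$, $Z_t\subseteq V_t$ with $|Z_s|=|Z_t|=:\ell\in\mathbb N$, either $H$ contains $\ell$ pairwise disjoint $Z_s$–$Z_t$ paths or some edge $e$ of the $s$–$t$ path in $T$ has $|V_e|<\ell$. With $T$ rooted at $r$, $\le_T$ is the tree-order, a rooted ray is a ray in $T$ starting at $r$, and for an edge $e$, $T_e$ is the component of $T-e$ not containing $r$ and $H\mathring{\uparrow}e$ is the subgraph of $H$ induced on $\bigcup_{u\in T_e}V_u\setminus V_e$. An end of $H$ is an equivalence class of rays, two rays being equivalent if for every finite $X\subseteq V(H)$ they have tails in the same component of $H-X$. If $X\subseteq V(H)$ meets every ray of an end $\varepsilon$ in only finitely many vertices, $C_H(X,\varepsilon)$ denotes the unique component of $H-X$ containing a tail of every ray in $\varepsilon$. An end $\varepsilon$ gives rise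 to (i.e. the ray arises from $\varepsilon$) the rooted ray $R$ in $T$ if every ray in $\varepsilon$ meets every bag $V_t$ with $t\in R$ in only finitely many vertices, and for every edge $e=st$ of $R$ with $s<_T t$ we have $C_H(V_s,\varepsilon)\subseteq H\mathring{\uparrow}e$. A vertex $v$ dominates $\varepsilon$ if $v\in C_H(X,\varepsilon)$ for every finite $X\subseteq V(H)\setminus\{v\}$; $\mathrm{Dom}(\varepsilon)$ is the set of vertices dominating $\varepsilon$. For a ray $R=t_0e_0t_1e_1\dots$ in $T$, $\liminf_{e\in E(R)}V_e:=\bigcup_{n\in\mathbb N}\bigcap_{i\ge n}V_{e_i}$. *)

theory Defs
  imports Main
begin

definition graph :: "'a set \<Rightarrow> ('a \<Rightarrow> 'a \<Rightarrow> bool) \<Rightarrow> bool" where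
  "graph V E \<longleftrightarrow> (\<forall>u v. E u v \<longrightarrow> u \<in> V \<and> v \<in> V \<and> E v u \<and> u \<noteq> v)"

definition gpath :: "'a set \<Rightarrow> ('a \<Rightarrow> 'a \<Rightarrow> bool) \<Rightarrow> 'a list \<Rightarrow> bool" where
  "gpath W E p \<longleftrightarrow> p \<noteq> [] \<and> distinct p \<and> set p \<subseteq> W \<and>
     (\<forall>i. Suc i < length p \<longrightarrow> E (p ! i) (p ! Suc i))"

definition conn :: "'a set \<Rightarrow> ('a \<Rightarrow> 'a \<Rightarrow> bool) \<Rightarrow> 'a \<Rightarrow> 'a \<Rightarrow> bool" where
  "conn W E x y \<longleftrightarrow> (\<exists>p. gpath W E p \<and> hd p = x \<and> last p = y)"

definition ABpath :: "'a set \<Rightarrow> ('a \<Rightarrow> 'a \<Rightarrow> bool) \<Rightarrow> 'a set \<Rightarrow> 'a set \<Rightarrow> 'a list \<Rightarrow> bool" where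
  "ABpath V E A B p \<longleftrightarrow> gpath V E p \<and> set p \<inter> A = {hd p} \<and> set p \<inter> B = {last p}"

definition ray :: "'a set \<Rightarrow> ('a \<Rightarrow> 'a \<Rightarrow> bool) \<Rightarrow> (nat \<Rightarrow> 'a) \<Rightarrow> bool" where
  "ray V E R \<longleftrightarrow> inj R \<and> (\<forall>n. R n \<in> V) \<and> (\<forall>n. E (R n) (R (Suc n)))"

definition ray_equiv :: "'a set \<Rightarrow> ('a \<Rightarrow> 'a \<Rightarrow> bool) \<Rightarrow> (nat \<Rightarrow> 'a) \<Rightarrow> (nat \<Rightarrow> 'a) \<Rightarrow> bool" where
  "ray_equiv V E R S \<longleftrightarrow> (\<forall>X. finite X \<and> X \<subseteq> V \<longrightarrow>
     (\<exists>n m. (\<forall>k\<ge>n. R k \<notin> X) \<and> (\<forall>k\<ge>m. S k \<notin> X) \<and> conn (V - X) E (R n) (S m)))"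

definition is_end :: "'a set \<Rightarrow> ('a \<Rightarrow> 'a \<Rightarrow> bool) \<Rightarrow> (nat \<Rightarrow> 'a) set \<Rightarrow> bool" where
  "is_end V E \<epsilon> \<longleftrightarrow> (\<exists>R. ray V E R \<and> \<epsilon> = {S. ray V E S \<and> ray_equiv V E R S})"

text \<open>C_H(X,eps): (vertex set of) the component of H - X containing a tail of every ray of eps.\<close>
definition endcomp :: "'a set \<Rightarrow> ('a \<Rightarrow> 'a \<Rightarrow> bool) \<Rightarrow> 'a set \<Rightarrow> (nat \<Rightarrow> 'a) set \<Rightarrow> 'a set" where
  "endcomp V E X \<epsilon> = {y \<in> V - X. \<forall>R\<in>\<epsilon>. \<exists>n. (\<forall>k\<ge>n. R k \<notin> X) \<and> conn (V - X) E (R n) y}"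

definition Dom :: "'a set \<Rightarrow> ('a \<Rightarrow> 'a \<Rightarrow> bool) \<Rightarrow> (nat \<Rightarrow> 'a) set \<Rightarrow> 'a set" where
  "Dom V E \<epsilon> = {v. \<forall>X. finite X \<and> X \<subseteq> V - {v} \<longrightarrow> v \<in> endcomp V E X \<epsilon>}"

definition tree :: "'b set \<Rightarrow> ('b \<Rightarrow> 'b \<Rightarrow> bool) \<Rightarrow> bool" where
  "tree N A \<longleftrightarrow> graph N A \<and> (\<forall>s\<in>N. \<forall>t\<in>N. \<exists>!p. gpath N A p \<and> hd p = s \<and> last p = t)"

definition tpath :: "'b set \<Rightarrow> ('b \<Rightarrow> 'b \<Rightarrow> bool) \<Rightarrow> 'b \<Rightarrow> 'b \<Rightarrow> 'b list \<Rightarrow> bool" where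
  "tpath N A s t p \<longleftrightarrow> gpath N A p \<and> hd p = s \<and> last p = t"

definition tree_decomp :: "'a set \<Rightarrow> ('a \<Rightarrow> 'a \<Rightarrow> bool) \<Rightarrow> 'b set \<Rightarrow> ('b \<Rightarrow> 'b \<Rightarrow> bool)
    \<Rightarrow> ('b \<Rightarrow> 'a set) \<Rightarrow> bool" where
  "tree_decomp V E N A B \<longleftrightarrow> tree N A \<and>
     (\<Union>t\<in>N. B t) = V \<and>
     (\<forall>u v. E u v \<longrightarrow> (\<exists>t\<in>N. u \<in> B t \<and> v \<in> B t)) \<and>
     (\<forall>v s t p. s \<in> N \<and> t \<in> N \<and> v \<in> B s \<and> v \<in> B t \<and> tpath N A s t p \<longrightarrow> (\<forall>u\<in>set p. v \<in> B u))"

definition finite_parts :: "'b set \<Rightarrow> ('b \<Rightarrow> 'a set) \<Rightarrow> bool" where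
  "finite_parts N B \<longleftrightarrow> (\<forall>t\<in>N. finite (B t))"

definition lean :: "'a set \<Rightarrow> ('a \<Rightarrow> 'a \<Rightarrow> bool) \<Rightarrow> 'b set \<Rightarrow> ('b \<Rightarrow> 'b \<Rightarrow> bool)
    \<Rightarrow> ('b \<Rightarrow> 'a set) \<Rightarrow> bool" where
  "lean V E N A B \<longleftrightarrow> (\<forall>s\<in>N. \<forall>t\<in>N. \<forall>Zs Zt. Zs \<subseteq> B s \<and> Zt \<subseteq> B t \<and> finite Zs \<and> finite Zt
      \<and> card Zs = card Zt \<longrightarrow>
      (\<exists>P. card P = card Zs \<and> (\<forall>p\<in>P. ABpath V E Zs Zt p) \<and>
            (\<forall>p\<in>P. \<forall>q\<in>P. p \<noteq> q \<longrightarrow> set p \<inter> set q = {}))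
      \<or> (\<exists>p. tpath N A s t p \<and> (\<exists>i. Suc i < length p \<and> card (B (p ! i) \<inter> B (p ! Suc i)) < card Zs)))"

definition tle :: "'b set \<Rightarrow> ('b \<Rightarrow> 'b \<Rightarrow> bool) \<Rightarrow> 'b \<Rightarrow> 'b \<Rightarrow> 'b \<Rightarrow> bool" where
  "tle N A r s t \<longleftrightarrow> (\<exists>p. tpath N A r t p \<and> s \<in> set p)"

definition tlt :: "'b set \<Rightarrow> ('b \<Rightarrow> 'b \<Rightarrow> bool) \<Rightarrow> 'b \<Rightarrow> 'b \<Rightarrow> 'b \<Rightarrow> bool" where
  "tlt N A r s t \<longleftrightarrow> tle N A r s t \<and> s \<noteq> t"

definition rooted_ray :: "'b set \<Rightarrow> ('b \<Rightarrow> 'b \<Rightarrow> bool) \<Rightarrow> 'b \<Rightarrow> (nat \<Rightarrow> 'b) \<Rightarrow> bool" where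
  "rooted_ray N A r R \<longleftrightarrow> ray N A R \<and> R 0 = r"

text \<open>T_e for the edge e = st: the component of T - e not containing r.\<close>
definition Tcomp :: "'b set \<Rightarrow> ('b \<Rightarrow> 'b \<Rightarrow> bool) \<Rightarrow> 'b \<Rightarrow> 'b \<Rightarrow> 'b \<Rightarrow> 'b set" where
  "Tcomp N A r s t = {u \<in> N. \<not> conn N (\<lambda>x y. A x y \<and> {x, y} \<noteq> {s, t}) u r}"

definition up :: "'b set \<Rightarrow> ('b \<Rightarrow> 'b \<Rightarrow> bool) \<Rightarrow> ('b \<Rightarrow> 'a set) \<Rightarrow> 'b \<Rightarrow> 'b \<Rightarrow> 'b \<Rightarrow> 'a set" where
  "up N A B r s t = (\<Union>u\<in>Tcomp N A r s t. B u) - (B s \<inter> B t)"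

definition arises_from :: "'a set \<Rightarrow> ('a \<Rightarrow> 'a \<Rightarrow> bool) \<Rightarrow> 'b set \<Rightarrow> ('b \<Rightarrow> 'b \<Rightarrow> bool)
    \<Rightarrow> ('b \<Rightarrow> 'a set) \<Rightarrow> 'b \<Rightarrow> (nat \<Rightarrow> 'a) set \<Rightarrow> (nat \<Rightarrow> 'b) \<Rightarrow> bool" where
  "arises_from V E N A B r \<epsilon> R \<longleftrightarrow>
     (\<forall>S\<in>\<epsilon>. \<forall>n. finite {k. S k \<in> B (R n)}) \<and>
     (\<forall>n. tlt N A r (R n) (R (Suc n)) \<longrightarrow> endcomp V E (B (R n)) \<epsilon> \<subseteq> up N A B r (R n) (R (Suc n)))"

definition liminf_sep :: "('b \<Rightarrow> 'a set) \<Rightarrow> (nat \<Rightarrow> 'b) \<Rightarrow> 'a set" where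
  "liminf_sep B R = (\<Union>n. \<Inter>i\<in>{n..}. B (R i) \<inter> B (R (Suc i)))"

end

theory Submission
  imports Defs
begin


definition ER :: "'a set \<Rightarrow> ('a \<Rightarrow> 'a \<Rightarrow> bool) \<Rightarrow> ('a \<times> 'a) set" where
  "ER W E = {(a,b). a \<in> W \<and> b \<in> W \<and> E a b}"

lemma gpath_take:
  assumes "gpath W E p" "i < length p"
  shows "gpath W E (take (Suc i) p)" "hd (take (Suc i) p) = hd p" "last (take (Suc i) p) = p ! i"
proof -
  show "gpath W E (take (Suc i) p)" using assms unfolding gpath_def
    by (auto dest: in_set_takeD)
  show "hd (take (Suc i) p) = hd p" by simp
  have l: "length (take (Suc i) p) = Suc i" using assms by simp
  then have "take (Suc i) p \<noteq> []" by auto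
  then show "last (take (Suc i) p) = p ! i" using l
    by (simp add: last_conv_nth)
qed

lemma gpath_snoc:
  assumes "gpath W E p" "z \<notin> set p" "z \<in> W" "E (last p) z"
  shows "gpath W E (p @ [z])"
  unfolding gpath_def
proof (intro conjI allI impI)
  show "p @ [z] \<noteq> []" by simp
  show "distinct (p @ [z])" using assms unfolding gpath_def by simp
  show "set (p @ [z]) \<subseteq> W" using assms unfolding gpath_def by simp
  fix i assume i: "Suc i < length (p @ [z])"
  show "E ((p @ [z]) ! i) ((p @ [z]) ! Suc i)"
  proof (cases "Suc i < length p")
    case True then show ?thesis using assms unfolding gpath_def by (simp add: nth_append)
  next
    case False
    then have "Suc i = length p" using i by simp
    moreover have "p \<noteq> []" using assms unfolding gpath_def by simp
    ultimately have "i = length p - 1" "p \<noteq> []" by auto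
    then show ?thesis using assms(4) by (simp add: nth_append last_conv_nth)
  qed
qed

lemma conn_imp_rtrancl:
  assumes "conn W E x y" shows "x \<in> W \<and> (x, y) \<in> (ER W E)\<^sup>*"
proof -
  obtain p where p: "gpath W E p" "hd p = x" "last p = y" using assms unfolding conn_def by blast
  have ne: "p \<noteq> []" using p unfolding gpath_def by simp
  have "\<forall>i<length p. (hd p, p ! i) \<in> (ER W E)\<^sup>*"
  proof (intro allI impI)
    fix i assume "i < length p"
    then show "(hd p, p ! i) \<in> (ER W E)\<^sup>*"
    proof (induction i)
      case 0 then show ?case using ne by (simp add: hd_conv_nth)
    next
      case (Suc i)
      then have "(hd p, p ! i) \<in> (ER W E)\<^sup>*" by simp
      moreover have "(p ! i, p ! Suc i) \<in> ER W E"
        using p(1) Suc.prems unfolding gpath_def ER_def by (auto intro!: nth_mem[THEN subsetD[rotated]])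
      ultimately show ?case by (rule rtrancl_into_rtrancl)
    qed
  qed
  moreover have "length p - 1 < length p" using ne by simp
  ultimately have "(x, p ! (length p - 1)) \<in> (ER W E)\<^sup>*" using p by blast
  then have "(x, y) \<in> (ER W E)\<^sup>*" using p ne by (simp add: last_conv_nth)
  moreover have "x \<in> W" using p ne unfolding gpath_def by (auto simp: hd_conv_nth)
  ultimately show ?thesis by simp
qed

lemma rtrancl_imp_conn:
  assumes "(x, y) \<in> (ER W E)\<^sup>*" "x \<in> W" shows "conn W E x y"
  using assms(1)
proof (induction rule: rtrancl_induct)
  case base
  have "gpath W E [x]" using assms(2) unfolding gpath_def by simp
  then show ?case unfolding conn_def by force
next
  case (step y z)
  obtain p where p: "gpath W E p" "hd p = x" "last p = y" using step.IH unfolding conn_def by blast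
  have yz: "y \<in> W" "z \<in> W" "E y z" using step.hyps(2) unfolding ER_def by auto
  show ?case
  proof (cases "z \<in> set p")
    case True
    then obtain i where i: "i < length p" "p ! i = z" by (auto simp: in_set_conv_nth)
    show ?thesis unfolding conn_def using gpath_take[OF p(1) i(1)] p i by metis
  next
    case False
    have "gpath W E (p @ [z])" using gpath_snoc[OF p(1) False yz(2)] p yz by simp
    moreover have "p \<noteq> []" using p unfolding gpath_def by simp
    ultimately show ?thesis unfolding conn_def using p by (metis hd_append2 last_snoc)
  qed
qed

lemma conn_iff: "conn W E x y \<longleftrightarrow> x \<in> W \<and> (x, y) \<in> (ER W E)\<^sup>*"
  using conn_imp_rtrancl rtrancl_imp_conn by metis

lemma conn_trans: "conn W E x y \<Longrightarrow> conn W E y z \<Longrightarrow> conn W E x z"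
  unfolding conn_iff by auto

lemma conn_in: "conn W E x y \<Longrightarrow> x \<in> W \<and> y \<in> W"
  unfolding conn_def gpath_def by (auto intro: hd_in_set last_in_set)

lemma conn_sym:
  assumes "\<And>a b. E a b \<Longrightarrow> E b a" "conn W E x y" shows "conn W E y x"
proof -
  have sym: "(ER W E)\<inverse> = ER W E" using assms(1) unfolding ER_def by auto
  have "(y, x) \<in> ((ER W E)\<inverse>)\<^sup>*" using assms(2) unfolding conn_iff
    by (simp add: rtrancl_converse)
  then have yx: "(y, x) \<in> (ER W E)\<^sup>*" using sym by simp
  have "y \<in> W" using conn_in[OF assms(2)] by simp
  then show ?thesis using yx unfolding conn_iff by simp
qed

lemma conn_refl: "x \<in> W \<Longrightarrow> conn W E x x"
  unfolding conn_iff by simp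

lemma conn_edge: assumes "conn W E x y" "z \<in> W" "E y z" shows "conn W E x z"
proof -
  have "y \<in> W" using conn_in[OF assms(1)] by simp
  then have "(y, z) \<in> ER W E" using assms unfolding ER_def by simp
  then show ?thesis using assms(1) unfolding conn_iff by auto
qed

lemma gpath_conn: "gpath W E p \<Longrightarrow> conn W E (hd p) (last p)"
  unfolding conn_def by blast



lemma graph_sym: "graph V E \<Longrightarrow> E a b \<Longrightarrow> E b a"
  unfolding graph_def by blast

lemma conn_sym_g: "graph V E \<Longrightarrow> conn W E x y \<Longrightarrow> conn W E y x"
  using conn_sym[of E W x y] graph_sym[of V E] by blast

lemma ray_tail: assumes "ray V E S" "finite X" shows "\<exists>n. \<forall>k\<ge>n. S k \<notin> X"
proof -
  have "finite (S -` X)" using assms unfolding ray_def by (auto intro: finite_vimageI)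
  then obtain n where "\<forall>k\<in>S -` X. k < n" using finite_nat_set_iff_bounded by blast
  then show ?thesis by (meson leD vimageI)
qed

lemma ray_seg:
  assumes "ray V E S" "\<forall>k\<ge>n. S k \<notin> X" "n \<le> a" "a \<le> b"
  shows "(S a, S b) \<in> (ER (V - X) E)\<^sup>*"
  using assms(4)
proof (induction b rule: dec_induct)
  case base then show ?case by simp
next
  case (step b)
  have "(S b, S (Suc b)) \<in> ER (V - X) E"
    using assms step.hyps unfolding ray_def ER_def by auto
  with step.IH show ?case by (rule rtrancl_into_rtrancl)
qed

lemma ray_conn:
  assumes "graph V E" "ray V E S" "\<forall>k\<ge>n. S k \<notin> X" "n \<le> a" "n \<le> b"
  shows "conn (V - X) E (S a) (S b)"
proof -
  have inW: "S a \<in> V - X" "S b \<in> V - X" using assms unfolding ray_def by auto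
  show ?thesis
  proof (cases "a \<le> b")
    case True then show ?thesis using ray_seg[OF assms(2,3,4) True] inW unfolding conn_iff by simp
  next
    case False
    then have "conn (V - X) E (S b) (S a)"
      using ray_seg[OF assms(2,3,5)] inW unfolding conn_iff by simp
    then show ?thesis using conn_sym_g[OF assms(1)] by blast
  qed
qed

lemma requiv_refl: assumes "ray V E S" shows "ray_equiv V E S S"
  unfolding ray_equiv_def
proof (intro allI impI)
  fix X :: "'a set" assume X: "finite X \<and> X \<subseteq> V"
  obtain n where n: "\<forall>k\<ge>n. S k \<notin> X" using ray_tail[OF assms] X by blast
  have "S n \<in> V - X" using assms n unfolding ray_def by auto
  then show "\<exists>n m. (\<forall>k\<ge>n. S k \<notin> X) \<and> (\<forall>k\<ge>m. S k \<notin> X) \<and> conn (V - X) E (S n) (S m)"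
    using n conn_refl[of "S n" "V - X" E] by blast
qed

lemma requiv_sym: assumes "graph V E" "ray_equiv V E R S" shows "ray_equiv V E S R"
  unfolding ray_equiv_def
proof (intro allI impI)
  fix X :: "'a set" assume X: "finite X \<and> X \<subseteq> V"
  have "\<exists>n m. (\<forall>k\<ge>n. R k \<notin> X) \<and> (\<forall>k\<ge>m. S k \<notin> X) \<and> conn (V - X) E (R n) (S m)"
    using assms(2) X unfolding ray_equiv_def by simp
  then obtain n m where 1: "\<forall>k\<ge>n. R k \<notin> X" "\<forall>k\<ge>m. S k \<notin> X" "conn (V - X) E (R n) (S m)"
    by blast
  have c: "conn (V - X) E (S m) (R n)" using conn_sym_g[OF assms(1) 1(3)] .
  show "\<exists>n m. (\<forall>k\<ge>n. S k \<notin> X) \<and> (\<forall>k\<ge>m. R k \<notin> X) \<and> conn (V - X) E (S n) (R m)"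
    apply (rule exI[of _ m], rule exI[of _ n]) using 1 c by simp
qed

lemma requiv_trans:
  assumes "graph V E" "ray V E S" "ray_equiv V E R S" "ray_equiv V E S T"
  shows "ray_equiv V E R T"
  unfolding ray_equiv_def
proof (intro allI impI)
  fix X :: "'a set" assume X: "finite X \<and> X \<subseteq> V"
  have "\<exists>n m. (\<forall>k\<ge>n. R k \<notin> X) \<and> (\<forall>k\<ge>m. S k \<notin> X) \<and> conn (V - X) E (R n) (S m)"
    using assms(3) X unfolding ray_equiv_def by simp
  then obtain n1 m1 where 1: "\<forall>k\<ge>n1. R k \<notin> X" "\<forall>k\<ge>m1. S k \<notin> X" "conn (V - X) E (R n1) (S m1)"
    by blast
  have "\<exists>n m. (\<forall>k\<ge>n. S k \<notin> X) \<and> (\<forall>k\<ge>m. T k \<notin> X) \<and> conn (V - X) E (S n) (T m)"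
    using assms(4) X unfolding ray_equiv_def by simp
  then obtain n2 m2 where 2: "\<forall>k\<ge>n2. S k \<notin> X" "\<forall>k\<ge>m2. T k \<notin> X" "conn (V - X) E (S n2) (T m2)"
    by blast
  have t: "\<forall>k\<ge>min m1 n2. S k \<notin> X" using 1(2) 2(1) by (simp add: min_def)
  have "conn (V - X) E (S m1) (S n2)" using ray_conn[OF assms(1,2) t] by simp
  then have c: "conn (V - X) E (R n1) (T m2)" using conn_trans[OF conn_trans[OF 1(3)] 2(3)] by blast
  show "\<exists>n m. (\<forall>k\<ge>n. R k \<notin> X) \<and> (\<forall>k\<ge>m. T k \<notin> X) \<and> conn (V - X) E (R n) (T m)"
    apply (rule exI[of _ n1], rule exI[of _ m2]) using 1(1) 2(2) c by simp
qed

lemma end_ray: "is_end V E \<epsilon> \<Longrightarrow> S \<in> \<epsilon> \<Longrightarrow> ray V E S"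
  unfolding is_end_def by auto

lemma end_equiv:
  assumes "graph V E" "is_end V E \<epsilon>" "S \<in> \<epsilon>" "S' \<in> \<epsilon>" shows "ray_equiv V E S S'"
proof -
  obtain R where R: "ray V E R" "\<epsilon> = {S. ray V E S \<and> ray_equiv V E R S}"
    using assms(2) unfolding is_end_def by blast
  then have "ray_equiv V E R S" "ray_equiv V E R S'" "ray V E S" using assms by auto
  then show ?thesis using requiv_trans[OF assms(1) R(1) requiv_sym[OF assms(1)]] by blast
qed

lemma end_eqI:
  assumes "graph V E" "is_end V E \<epsilon>1" "is_end V E \<epsilon>2" "S1 \<in> \<epsilon>1" "S2 \<in> \<epsilon>2"
    "ray_equiv V E S1 S2"
  shows "\<epsilon>1 = \<epsilon>2"
proof -
  obtain R1 where R1: "ray V E R1" "\<epsilon>1 = {S. ray V E S \<and> ray_equiv V E R1 S}"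
    using assms(2) unfolding is_end_def by blast
  obtain R2 where R2: "ray V E R2" "\<epsilon>2 = {S. ray V E S \<and> ray_equiv V E R2 S}"
    using assms(3) unfolding is_end_def by blast
  have r12: "ray_equiv V E R1 R2"
  proof -
    have a: "ray_equiv V E R1 S1" "ray V E S1" using assms(4) R1 by auto
    have b: "ray_equiv V E R2 S2" "ray V E S2" using assms(5) R2 by auto
    have "ray_equiv V E R1 S2" using requiv_trans[OF assms(1) a(2) a(1) assms(6)] .
    then show ?thesis using requiv_trans[OF assms(1) b(2)] requiv_sym[OF assms(1) b(1)] by blast
  qed
  have r21: "ray_equiv V E R2 R1" using requiv_sym[OF assms(1) r12] .
  show ?thesis
  proof (rule set_eqI, rule iffI)
    fix S assume "S \<in> \<epsilon>1"
    then have "ray V E S" "ray_equiv V E R1 S" using R1 by auto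
    then show "S \<in> \<epsilon>2" using R2 requiv_trans[OF assms(1) R1(1) r21] by auto
  next
    fix S assume "S \<in> \<epsilon>2"
    then have "ray V E S" "ray_equiv V E R2 S" using R2 by auto
    then show "S \<in> \<epsilon>1" using R1 requiv_trans[OF assms(1) R2(1) r12] by auto
  qed
qed

lemma end_mem: "is_end V E \<epsilon> \<Longrightarrow> \<exists>S. S \<in> \<epsilon>"
  unfolding is_end_def using requiv_refl by blast



lemma gpath_succ: "gpath W E p \<longleftrightarrow> p \<noteq> [] \<and> distinct p \<and> set p \<subseteq> W \<and> successively E p"
  unfolding gpath_def successively_conv_nth by simp

lemma gpath_rev: assumes "gpath W E p" "\<And>a b. E a b \<Longrightarrow> E b a" shows "gpath W E (rev p)"
proof -
  have "successively E p" using assms(1) unfolding gpath_succ by simp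
  then have "successively (\<lambda>x y. E y x) p" by (rule successively_mono) (rule assms(2))
  then show ?thesis using assms(1) unfolding gpath_succ by simp
qed

lemma gpath_mono: assumes "gpath W E p" "\<And>a b. E a b \<Longrightarrow> E' a b" shows "gpath W E' p"
  using assms unfolding gpath_def by simp

locale ctx =
  fixes V :: "'a set" and E :: "'a \<Rightarrow> 'a \<Rightarrow> bool"
    and N :: "'b set" and A :: "'b \<Rightarrow> 'b \<Rightarrow> bool" and B :: "'b \<Rightarrow> 'a set" and r :: 'b
    and R :: "nat \<Rightarrow> 'b"
  assumes gr: "graph V E" and td: "tree_decomp V E N A B" and fp: "finite_parts N B"
    and ln: "lean V E N A B" and rN: "r \<in> N" and rr: "rooted_ray N A r R"
begin

definition Sep :: "nat \<Rightarrow> 'a set" where "Sep k = B (R k) \<inter> B (R (Suc k))"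
definition Tc :: "nat \<Rightarrow> 'b set" where "Tc k = Tcomp N A r (R k) (R (Suc k))"
definition Up :: "nat \<Rightarrow> 'a set" where "Up k = up N A B r (R k) (R (Suc k))"
definition Ak :: "nat \<Rightarrow> 'b \<Rightarrow> 'b \<Rightarrow> bool" where "Ak k = (\<lambda>x y. A x y \<and> {x, y} \<noteq> {R k, R (Suc k)})"

lemmas tdc = td[unfolded tree_decomp_def]
lemmas td' = tdc[THEN conjunct1] tdc[THEN conjunct2, THEN conjunct1]
  tdc[THEN conjunct2, THEN conjunct2, THEN conjunct1] tdc[THEN conjunct2, THEN conjunct2, THEN conjunct2]
lemma tr: "tree N A" using td'(1) .
lemmas trc = tr[unfolded tree_def]
lemmas tr' = trc[THEN conjunct1] trc[THEN conjunct2]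
lemma grN: "graph N A" using tr'(1) .
lemma Asym: "A a b \<Longrightarrow> A b a" using grN unfolding graph_def by blast
lemma Aksym: "Ak k a b \<Longrightarrow> Ak k b a" using Asym unfolding Ak_def by (auto simp: insert_commute)
lemma Esym: "E a b \<Longrightarrow> E b a" using gr unfolding graph_def by blast
lemmas rrc = rr[unfolded rooted_ray_def ray_def]
lemmas rr' = rrc[THEN conjunct1, THEN conjunct1] rrc[THEN conjunct1, THEN conjunct2, THEN conjunct1]
  rrc[THEN conjunct1, THEN conjunct2, THEN conjunct2] rrc[THEN conjunct2]
lemma RN: "R k \<in> N" using rr'(2) by blast
lemma Rinj: "inj R" using rr'(1) .
lemma Radj: "A (R k) (R (Suc k))" using rr'(3) by blast
lemma R0: "R 0 = r" using rr'(4) .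
lemma BV: "t \<in> N \<Longrightarrow> B t \<subseteq> V" using td'(2) by blast
lemma finB: "t \<in> N \<Longrightarrow> finite (B t)" using fp unfolding finite_parts_def by blast
lemma edge_bag: "E x y \<Longrightarrow> \<exists>t\<in>N. x \<in> B t \<and> y \<in> B t" using td'(3) by blast
lemma cl4: "s \<in> N \<Longrightarrow> t \<in> N \<Longrightarrow> v \<in> B s \<Longrightarrow> v \<in> B t \<Longrightarrow> tpath N A s t p \<Longrightarrow> u \<in> set p \<Longrightarrow> v \<in> B u"
  using td'(4) by blast
lemma VB: "v \<in> V \<Longrightarrow> \<exists>t\<in>N. v \<in> B t" using td'(2) by blast
lemma ex1_uniq: "\<exists>!x. P x \<Longrightarrow> P a \<Longrightarrow> P b \<Longrightarrow> a = b" by blast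
lemma tree_ex: assumes "s \<in> N" "t \<in> N" shows "\<exists>p. tpath N A s t p"
proof -
  have "\<exists>!p. gpath N A p \<and> hd p = s \<and> last p = t" using tr'(2) assms by blast
  then show ?thesis unfolding tpath_def by (rule ex1_implies_ex)
qed
lemma tree_uniq: assumes "s \<in> N" "t \<in> N" "tpath N A s t p" "tpath N A s t q" shows "p = q"
proof -
  have "\<exists>!p. gpath N A p \<and> hd p = s \<and> last p = t" using tr'(2) assms by blast
  then show ?thesis using assms(3,4) unfolding tpath_def by (rule ex1_uniq)
qed

lemma seg_len: "length (map R [i..<Suc j]) = Suc j - i" by (simp only: length_map length_upt)

lemma seg_nth: "k < Suc j - i \<Longrightarrow> map R [i..<Suc j] ! k = R (i + k)"
  by (simp del: upt_Suc)

lemma seg: assumes "i \<le> j" shows "tpath N A (R i) (R j) (map R [i..<Suc j])"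
proof -
  have ne: "map R [i..<Suc j] \<noteq> []" using assms by (simp del: upt_Suc)
  have "distinct (map R [i..<Suc j])"
    by (simp only: distinct_map distinct_upt) (meson Rinj inj_on_subset subset_UNIV)
  moreover have "\<forall>k. Suc k < length (map R [i..<Suc j]) \<longrightarrow>
      A (map R [i..<Suc j] ! k) (map R [i..<Suc j] ! Suc k)"
  proof (intro allI impI)
    fix k assume "Suc k < length (map R [i..<Suc j])"
    then have "Suc k < Suc j - i" by (simp only: seg_len)
    then have "map R [i..<Suc j] ! k = R (i + k)" "map R [i..<Suc j] ! Suc k = R (Suc (i + k))"
      using seg_nth[of k j i] seg_nth[of "Suc k" j i] by simp_all
    then show "A (map R [i..<Suc j] ! k) (map R [i..<Suc j] ! Suc k)" using Radj by simp
  qed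
  moreover have "set (map R [i..<Suc j]) \<subseteq> N" using RN by auto
  moreover have "hd (map R [i..<Suc j]) = R i"
    using ne seg_nth[of 0 j i] assms by (simp add: hd_conv_nth del: upt_Suc)
  moreover have "last (map R [i..<Suc j]) = R j"
  proof -
    have e: "Suc j - i - 1 = j - i" "j - i < Suc j - i" "i + (j - i) = j" using assms by auto
    have "last (map R [i..<Suc j]) = map R [i..<Suc j] ! (Suc j - i - 1)"
      by (simp only: last_conv_nth[OF ne] seg_len)
    also have "\<dots> = R j" using seg_nth[OF e(2)] e(1,3) by simp
    finally show ?thesis .
  qed
  ultimately show ?thesis unfolding tpath_def gpath_def using ne by blast
qed

lemma conn_Ak_sym: "conn W (Ak k) x y \<Longrightarrow> conn W (Ak k) y x"
  by (rule conn_sym[of "Ak k"]) (rule Aksym)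

lemma gpath_Ak:
  assumes "gpath N A p" "\<forall>i. Suc i < length p \<longrightarrow> {p ! i, p ! Suc i} \<noteq> {R k, R (Suc k)}"
  shows "gpath N (Ak k) p"
  using assms unfolding gpath_def Ak_def by blast

lemma not_Tc: assumes "u0 \<in> N" shows "\<exists>K. \<forall>k\<ge>K. u0 \<notin> Tc k"
proof -
  obtain p where p: "tpath N A u0 r p" using tree_ex[OF assms rN] by blast
  have "finite (R -` set p)" using Rinj by (auto intro: finite_vimageI)
  then obtain K where K: "\<forall>k\<in>R -` set p. k < K" using finite_nat_set_iff_bounded by blast
  have "u0 \<notin> Tc k" if "k \<ge> K" for k
  proof -
    have nk: "R k \<notin> set p"
    proof
      assume "R k \<in> set p" then have "k < K" using K by blast
      with that show False by simp
    qed
    have "\<forall>i. Suc i < length p \<longrightarrow> {p ! i, p ! Suc i} \<noteq> {R k, R (Suc k)}"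
    proof (intro allI impI)
      fix i assume "Suc i < length p"
      then have "p ! i \<in> set p" "p ! Suc i \<in> set p" by auto
      then show "{p ! i, p ! Suc i} \<noteq> {R k, R (Suc k)}" using nk by (auto simp: doubleton_eq_iff)
    qed
    then have "gpath N (Ak k) p" using gpath_Ak p unfolding tpath_def by blast
    then have "conn N (Ak k) u0 r" using p unfolding tpath_def conn_def by blast
    then show ?thesis unfolding Tc_def Tcomp_def Ak_def by blast
  qed
  then show ?thesis by blast
qed

lemma cross:
  assumes "t \<in> N" "t \<notin> Tc k" "u \<in> Tc k" "tpath N A t u p"
  shows "R k \<in> set p \<and> R (Suc k) \<in> set p"
proof (rule ccontr)
  assume nc: "\<not> (R k \<in> set p \<and> R (Suc k) \<in> set p)"
  have "\<forall>i. Suc i < length p \<longrightarrow> {p ! i, p ! Suc i} \<noteq> {R k, R (Suc k)}"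
  proof (intro allI impI)
    fix i assume "Suc i < length p"
    then have "p ! i \<in> set p" "p ! Suc i \<in> set p" by auto
    then show "{p ! i, p ! Suc i} \<noteq> {R k, R (Suc k)}" using nc by (auto simp: doubleton_eq_iff)
  qed
  then have "gpath N (Ak k) p" using gpath_Ak assms(4) unfolding tpath_def by blast
  then have c1: "conn N (Ak k) t u" using assms(4) unfolding tpath_def conn_def by blast
  have c2: "conn N (Ak k) t r" using assms(1,2) unfolding Tc_def Tcomp_def Ak_def by blast
  have "conn N (Ak k) u r" using conn_trans[OF conn_Ak_sym[OF c1] c2] .
  then show False using assms(3) unfolding Tc_def Tcomp_def Ak_def by blast
qed

lemma R_Tc: assumes "i < j" shows "R j \<in> Tc i"
proof (rule ccontr)
  assume "R j \<notin> Tc i"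
  then have "conn N (Ak i) (R j) r" using RN unfolding Tc_def Tcomp_def Ak_def by blast
  then have "conn N (Ak i) r (R j)" by (rule conn_Ak_sym)
  then obtain q where q: "gpath N (Ak i) q" "hd q = r" "last q = R j" unfolding conn_def by blast
  have "gpath N A q" using gpath_mono[OF q(1)] unfolding Ak_def by blast
  then have "tpath N A (R 0) (R j) q" using q R0 unfolding tpath_def by simp
  then have qe: "q = map R [0..<Suc j]" using tree_uniq[OF RN RN _ seg] by blast
  have "Suc i < length q" using assms qe by simp
  then have "Ak i (q ! i) (q ! Suc i)" using q(1) unfolding gpath_def by blast
  moreover have "q ! i = R i" "q ! Suc i = R (Suc i)"
    using qe assms seg_nth[of i j 0] seg_nth[of "Suc i" j 0] by simp_all
  ultimately show False unfolding Ak_def by simp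
qed

end


context ctx begin

lemma inf_nat_ge: "infinite (S::nat set) \<Longrightarrow> \<exists>j\<in>S. j \<ge> k"
  by (meson finite_nat_set_iff_bounded not_le)

lemma Tc_N: "Tc k \<subseteq> N" unfolding Tc_def Tcomp_def by blast

lemma Up_eq: "Up k = (\<Union>u\<in>Tc k. B u) - Sep k"
  unfolding Up_def up_def Tc_def Sep_def by simp

lemma interval:
  assumes "x \<in> B (R i)" "x \<in> B (R j)" "i \<le> k" "k \<le> j"
  shows "x \<in> B (R k)"
proof -
  have "k \<in> set [i..<Suc j]" using assms(3,4) by (simp del: upt_Suc)
  then have "R k \<in> set (map R [i..<Suc j])" by (simp only: set_map) (rule imageI)
  then show ?thesis using cl4[OF RN RN assms(1,2) seg] assms by auto
qed

lemma sep:
  assumes "E x y" "y \<in> Up k" "x \<notin> Up k" shows "x \<in> Sep k"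
proof -
  obtain t where t: "t \<in> N" "x \<in> B t" "y \<in> B t" using edge_bag[OF assms(1)] by blast
  obtain u where u: "u \<in> Tc k" "y \<in> B u" "y \<notin> Sep k" using assms(2) unfolding Up_eq by blast
  show ?thesis
  proof (cases "t \<in> Tc k")
    case True then show ?thesis using t assms(3) unfolding Up_eq by blast
  next
    case False
    have uN: "u \<in> N" using u Tc_N by blast
    obtain p where p: "tpath N A t u p" using tree_ex[OF t(1) uN] by blast
    have "R k \<in> set p" "R (Suc k) \<in> set p" using cross[OF t(1) False u(1) p] by auto
    then have "y \<in> Sep k" using cl4[OF t(1) uN t(3) u(2) p] unfolding Sep_def by blast
    then show ?thesis using u by blast
  qed
qed

lemma ev_bag: assumes "x \<in> V" shows "\<exists>K. \<forall>k\<ge>K. \<forall>u\<in>Tc k. x \<in> B u \<longrightarrow> x \<in> B (R k)"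
proof -
  obtain u0 where u0: "u0 \<in> N" "x \<in> B u0" using VB[OF assms] by blast
  obtain K where K: "\<forall>k\<ge>K. u0 \<notin> Tc k" using not_Tc[OF u0(1)] by blast
  have "x \<in> B (R k)" if "k \<ge> K" "u \<in> Tc k" "x \<in> B u" for k u
  proof -
    have uN: "u \<in> N" using that Tc_N by blast
    obtain p where p: "tpath N A u0 u p" using tree_ex[OF u0(1) uN] by blast
    have "R k \<in> set p" using cross[OF u0(1) _ that(2) p] K that(1) by blast
    then show ?thesis using cl4[OF u0(1) uN u0(2) that(3) p] by blast
  qed
  then show ?thesis by blast
qed

lemma stab: "\<exists>K. (\<forall>k\<ge>K. x \<in> B (R k)) \<or> (\<forall>k\<ge>K. x \<notin> B (R k))"
proof (cases "finite {k. x \<in> B (R k)}")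
  case True
  then obtain K where "\<forall>k\<in>{k. x \<in> B (R k)}. k < K" using finite_nat_set_iff_bounded by blast
  then have "\<forall>k\<ge>K. x \<notin> B (R k)" by force
  then show ?thesis by blast
next
  case False
  then obtain k0 where k0: "x \<in> B (R k0)" by (metis (mono_tags, lifting) empty_Collect_eq finite.emptyI)
  have "x \<in> B (R k)" if "k \<ge> k0" for k
  proof -
    obtain j where "j \<ge> k" "x \<in> B (R j)" using inf_nat_ge[OF False, of k] by blast
    then show ?thesis using interval[OF k0 _ that] by blast
  qed
  then show ?thesis by blast
qed

lemma ev_notUp: assumes "x \<in> V" shows "\<exists>K. \<forall>k\<ge>K. x \<notin> Up k"
proof -
  obtain K1 where K1: "\<forall>k\<ge>K1. \<forall>u\<in>Tc k. x \<in> B u \<longrightarrow> x \<in> B (R k)" using ev_bag[OF assms] by blast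
  obtain K2 where K2: "(\<forall>k\<ge>K2. x \<in> B (R k)) \<or> (\<forall>k\<ge>K2. x \<notin> B (R k))" using stab by blast
  have "x \<notin> Up k" if "k \<ge> max K1 K2" for k
  proof
    assume "x \<in> Up k"
    then obtain u where u: "u \<in> Tc k" "x \<in> B u" "x \<notin> Sep k" unfolding Up_eq by blast
    then have "x \<in> B (R k)" using K1 that by auto
    then have "x \<notin> B (R (Suc k))" using u(3) unfolding Sep_def by blast
    then show False using K2 that \<open>x \<in> B (R k)\<close> by auto
  qed
  then show ?thesis by blast
qed

lemma bag_sub_Up: assumes "i < j" shows "B (R j) \<subseteq> Up i \<union> Sep i"
  using R_Tc[OF assms] unfolding Up_eq by blast

lemma tlt_R: "tlt N A r (R n) (R (Suc n))"
proof -
  have "tpath N A (R 0) (R (Suc n)) (map R [0..<Suc (Suc n)])" by (rule seg) simp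
  moreover have "R n \<in> set (map R [0..<Suc (Suc n)])"
  proof -
    have "n \<in> set [0..<Suc (Suc n)]" by (simp del: upt_Suc)
    then show ?thesis by (simp only: set_map) (rule imageI)
  qed
  moreover have "R n \<noteq> R (Suc n)" using Rinj by (simp add: inj_eq)
  ultimately show ?thesis unfolding tlt_def tle_def R0 by blast
qed

end


lemma succ_prop:
  "successively P q \<Longrightarrow> q \<noteq> [] \<Longrightarrow> Q (hd q) \<Longrightarrow> (\<forall>u w. Q u \<longrightarrow> P u w \<longrightarrow> w \<in> set q \<longrightarrow> Q w)
    \<Longrightarrow> \<forall>x\<in>set q. Q x"
proof (induction q rule: induct_list012)
  case 1 then show ?case by simp
next
  case (2 x) then show ?case by simp
next
  case (3 x y zs)
  have Pxy: "P x y" and sy: "successively P (y # zs)" using "3.prems"(1) by simp_all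
  have qx: "Q x" using "3.prems"(3) by simp
  have ys: "y \<in> set (x # y # zs)" by simp
  have qy: "Q y" using "3.prems"(4) qx Pxy ys by blast
  have st: "\<forall>u w. Q u \<longrightarrow> P u w \<longrightarrow> w \<in> set (y # zs) \<longrightarrow> Q w"
  proof (intro allI impI)
    fix u w assume "Q u" "P u w" "w \<in> set (y # zs)"
    then show "Q w" using "3.prems"(4) by (metis list.set_intros(2))
  qed
  have "\<forall>x\<in>set (y # zs). Q x"
    using "3.IH"(2)[OF sy] qy st by simp
  then show ?case using qx by simp
qed

context ctx begin

lemma path_key:
  assumes ab: "ABpath V E (Sep i0) Zt p" and j: "i0 < j" and Zt: "Zt \<subseteq> B (R j)"
    and XZ: "X \<inter> Sep i0 \<subseteq> Zt" and XU: "X \<inter> Up i0 = {}"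
    and KX: "K \<subseteq> V - X" and cl: "\<forall>u w. u \<in> K \<longrightarrow> w \<in> V - X \<longrightarrow> E u w \<longrightarrow> w \<in> K"
  shows "hd p \<in> K \<longleftrightarrow> last p \<in> K"
proof -
  have g: "gpath V E p" and hz: "set p \<inter> Sep i0 = {hd p}" and lz: "set p \<inter> Zt = {last p}"
    using ab unfolding ABpath_def by auto
  have ne: "p \<noteq> []" and dp: "distinct p" and pV: "set p \<subseteq> V" and sc: "successively E p"
    using g unfolding gpath_succ by auto
  show ?thesis
  proof (cases "hd p \<in> X \<or> hd p = last p")
    case True
    then have "hd p = last p"
    proof
      assume "hd p \<in> X"
      moreover have "hd p \<in> Sep i0" using hz by blast
      ultimately have "hd p \<in> Zt" using XZ by blast
      moreover have "hd p \<in> set p" using ne by simp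
      ultimately show ?thesis using lz by blast
    qed
    then show ?thesis by simp
  next
    case False
    then have hX: "hd p \<notin> X" and hl: "hd p \<noteq> last p" by auto
    obtain x xs where pxs: "p = x # xs" using ne by (cases p) auto
    have xs_ne: "xs \<noteq> []" using hl pxs by auto
    have tlS: "\<forall>y\<in>set xs. y \<notin> Sep i0"
    proof
      fix y assume y: "y \<in> set xs"
      then have "y \<noteq> x" using dp pxs by auto
      then show "y \<notin> Sep i0" using hz y pxs by auto
    qed
    have lastU: "last xs \<in> Up i0"
    proof -
      have "last xs = last p" using pxs xs_ne by simp
      then have "last xs \<in> Zt" "last xs \<in> set xs" using lz last_in_set[OF xs_ne] by auto
      then show ?thesis using bag_sub_Up[OF j] Zt tlS by blast
    qed
    have "successively E (x # xs)" using sc pxs by simp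
    then have scxs: "successively E xs" using xs_ne by (simp only: successively_Cons) blast
    have "successively (\<lambda>a b. E b a) (rev xs)" using scxs by simp
    moreover have "rev xs \<noteq> []" using xs_ne by simp
    moreover have "hd (rev xs) \<in> Up i0" using lastU xs_ne by (simp add: hd_rev)
    moreover have "\<forall>u w. u \<in> Up i0 \<longrightarrow> E w u \<longrightarrow> w \<in> set (rev xs) \<longrightarrow> w \<in> Up i0"
    proof (intro allI impI)
      fix u w assume "u \<in> Up i0" "E w u" "w \<in> set (rev xs)"
      then have "w \<notin> Sep i0" using tlS by simp
      then show "w \<in> Up i0" using sep[OF \<open>E w u\<close> \<open>u \<in> Up i0\<close>] by blast
    qed
    ultimately have "\<forall>y\<in>set (rev xs). y \<in> Up i0" by (rule succ_prop[where Q = "\<lambda>y. y \<in> Up i0"])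
    then have xsU: "set xs \<subseteq> Up i0" by auto
    have pVX: "set p \<subseteq> V - X" using xsU XU hX pxs pV by auto
    show ?thesis
    proof
      assume "hd p \<in> K"
      have "\<forall>u w. u \<in> K \<longrightarrow> E u w \<longrightarrow> w \<in> set p \<longrightarrow> w \<in> K" using cl pVX by blast
      then have "\<forall>y\<in>set p. y \<in> K" using succ_prop[OF sc ne, where Q = "\<lambda>y. y \<in> K"] \<open>hd p \<in> K\<close> by blast
      then show "last p \<in> K" using ne by simp
    next
      assume "last p \<in> K"
      have "successively (\<lambda>a b. E b a) (rev p)" using sc by simp
      moreover have "rev p \<noteq> []" using ne by simp
      moreover have "hd (rev p) \<in> K" using \<open>last p \<in> K\<close> ne by (simp add: hd_rev)
      moreover have "\<forall>u w. u \<in> K \<longrightarrow> E w u \<longrightarrow> w \<in> set (rev p) \<longrightarrow> w \<in> K"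
      proof (intro allI impI)
        fix u w assume "u \<in> K" "E w u" "w \<in> set (rev p)"
        then have "w \<in> V - X" "E u w" using pVX Esym[OF \<open>E w u\<close>] by auto
        then show "w \<in> K" using cl \<open>u \<in> K\<close> by blast
      qed
      ultimately have "\<forall>y\<in>set (rev p). y \<in> K" by (rule succ_prop[where Q = "\<lambda>y. y \<in> K"])
      then show "hd p \<in> K" using ne by simp
    qed
  qed
qed

lemma core_count:
  assumes j: "i0 < j" and Zt: "Zt \<subseteq> B (R j)" and cZ: "card Zt = card (Sep i0)"
    and XZ: "X \<inter> Sep i0 \<subseteq> Zt" and XU: "X \<inter> Up i0 = {}"
    and KX: "K \<subseteq> V - X" and cl: "\<forall>u w. u \<in> K \<longrightarrow> w \<in> V - X \<longrightarrow> E u w \<longrightarrow> w \<in> K"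
    and H4: "\<forall>k\<ge>i0. card (Sep i0) \<le> card (Sep k)"
  shows "card (Sep i0 \<inter> K) = card (Zt \<inter> K)"
proof -
  let ?Zs = "Sep i0"
  have fZs: "finite ?Zs" using finB[OF RN] unfolding Sep_def by blast
  have fZt: "finite Zt" using finB[OF RN] Zt finite_subset by blast
  have ZsB: "?Zs \<subseteq> B (R i0)" unfolding Sep_def by blast
  have lean': "(\<exists>P. card P = card ?Zs \<and> (\<forall>p\<in>P. ABpath V E ?Zs Zt p) \<and>
            (\<forall>p\<in>P. \<forall>q\<in>P. p \<noteq> q \<longrightarrow> set p \<inter> set q = {}))
      \<or> (\<exists>p. tpath N A (R i0) (R j) p \<and> (\<exists>i. Suc i < length p \<and> card (B (p ! i) \<inter> B (p ! Suc i)) < card ?Zs))"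
  proof -
    have pre: "?Zs \<subseteq> B (R i0) \<and> Zt \<subseteq> B (R j) \<and> finite ?Zs \<and> finite Zt \<and> card ?Zs = card Zt"
      using ZsB Zt fZs fZt cZ by simp
    show ?thesis by (rule ln[unfolded lean_def, rule_format, OF RN RN pre])
  qed
  have no2: "\<not> (\<exists>p. tpath N A (R i0) (R j) p \<and> (\<exists>i. Suc i < length p \<and> card (B (p ! i) \<inter> B (p ! Suc i)) < card ?Zs))"
  proof
    assume "\<exists>p. tpath N A (R i0) (R j) p \<and> (\<exists>i. Suc i < length p \<and> card (B (p ! i) \<inter> B (p ! Suc i)) < card ?Zs)"
    then obtain p i where p: "tpath N A (R i0) (R j) p" "Suc i < length p"
      "card (B (p ! i) \<inter> B (p ! Suc i)) < card ?Zs" by blast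
    have pe: "p = map R [i0..<Suc j]" using tree_uniq[OF RN RN p(1) seg] j by simp
    have "Suc i < Suc j - i0" using p(2) pe seg_len by simp
    then have "p ! i = R (i0 + i)" "p ! Suc i = R (Suc (i0 + i))"
      using pe seg_nth[of i j i0] seg_nth[of "Suc i" j i0] by simp_all
    then have "B (p ! i) \<inter> B (p ! Suc i) = Sep (i0 + i)" unfolding Sep_def by simp
    moreover have "card ?Zs \<le> card (Sep (i0 + i))" using H4 by simp
    ultimately show False using p(3) by simp
  qed
  obtain P where P: "card P = card ?Zs" "\<forall>p\<in>P. ABpath V E ?Zs Zt p"
    "\<forall>p\<in>P. \<forall>q\<in>P. p \<noteq> q \<longrightarrow> set p \<inter> set q = {}"
    using lean' no2 by blast
  have pne: "\<forall>p\<in>P. p \<noteq> []" using P(2) unfolding ABpath_def gpath_def by blast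
  have injh: "inj_on hd P"
  proof (rule inj_onI)
    fix p q assume pq: "p \<in> P" "q \<in> P" "hd p = hd q"
    show "p = q"
    proof (rule ccontr)
      assume "p \<noteq> q"
      then have "set p \<inter> set q = {}" using P(3) pq by blast
      moreover have "p \<noteq> []" "q \<noteq> []" using pne pq(1,2) by blast+
      then have "hd p \<in> set p" "hd q \<in> set q" by simp_all
      ultimately show False using pq(3) by (metis disjoint_iff)
    qed
  qed
  have injl: "inj_on last P"
  proof (rule inj_onI)
    fix p q assume pq: "p \<in> P" "q \<in> P" "last p = last q"
    show "p = q"
    proof (rule ccontr)
      assume "p \<noteq> q"
      then have "set p \<inter> set q = {}" using P(3) pq by blast
      moreover have "p \<noteq> []" "q \<noteq> []" using pne pq(1,2) by blast+
      then have "last p \<in> set p" "last q \<in> set q" by simp_all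
      ultimately show False using pq(3) by (metis disjoint_iff)
    qed
  qed
  have hsub: "hd ` P \<subseteq> ?Zs"
  proof
    fix z assume "z \<in> hd ` P"
    then obtain p where "p \<in> P" "z = hd p" by blast
    then have "set p \<inter> ?Zs = {hd p}" using P(2) unfolding ABpath_def by blast
    then show "z \<in> ?Zs" using \<open>z = hd p\<close> by blast
  qed
  have lsub: "last ` P \<subseteq> Zt"
  proof
    fix z assume "z \<in> last ` P"
    then obtain p where "p \<in> P" "z = last p" by blast
    then have "set p \<inter> Zt = {last p}" using P(2) unfolding ABpath_def by blast
    then show "z \<in> Zt" using \<open>z = last p\<close> by blast
  qed
  have finP: "finite P" using finite_imageD[OF finite_subset[OF hsub fZs] injh] .
  have c1: "card (hd ` P) = card ?Zs" using card_image[OF injh] P(1) by simp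
  have hP: "hd ` P = ?Zs" by (rule card_subset_eq[OF fZs hsub c1])
  have c2: "card (last ` P) = card Zt" using card_image[OF injl] P(1) cZ by simp
  have lP: "last ` P = Zt" by (rule card_subset_eq[OF fZt lsub c2])
  have key: "hd p \<in> K \<longleftrightarrow> last p \<in> K" if "p \<in> P" for p
  proof -
    have "ABpath V E ?Zs Zt p" using P(2) that by blast
    then show ?thesis by (rule path_key[OF _ j Zt XZ XU KX cl])
  qed
  let ?PK = "{p\<in>P. hd p \<in> K}"
  have e1: "?Zs \<inter> K = hd ` ?PK"
  proof
    show "?Zs \<inter> K \<subseteq> hd ` ?PK"
    proof
      fix z assume z: "z \<in> ?Zs \<inter> K"
      then obtain p where "p \<in> P" "z = hd p" using hP by blast
      then show "z \<in> hd ` ?PK" using z by blast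
    qed
    show "hd ` ?PK \<subseteq> ?Zs \<inter> K" using hsub by blast
  qed
  have e2: "Zt \<inter> K = last ` ?PK"
  proof
    show "Zt \<inter> K \<subseteq> last ` ?PK"
    proof
      fix z assume z: "z \<in> Zt \<inter> K"
      then obtain p where p: "p \<in> P" "z = last p" using lP by blast
      then have "hd p \<in> K" using key[OF p(1)] z by blast
      then show "z \<in> last ` ?PK" using p by blast
    qed
    show "last ` ?PK \<subseteq> Zt \<inter> K"
    proof
      fix z assume "z \<in> last ` ?PK"
      then obtain p where p: "p \<in> P" "hd p \<in> K" "z = last p" by blast
      then have "last p \<in> K" using key[OF p(1)] by blast
      then show "z \<in> Zt \<inter> K" using p lsub by blast
    qed
  qed
  have "card (hd ` ?PK) = card ?PK" by (rule card_image) (rule inj_on_subset[OF injh], blast)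
  moreover have "card (last ` ?PK) = card ?PK" by (rule card_image) (rule inj_on_subset[OF injl], blast)
  ultimately show ?thesis using e1 e2 by simp
qed

end


lemma fin_bound:
  assumes "finite X" "\<forall>x\<in>X. \<exists>K. Q x K" "\<forall>x K K'. Q x K \<longrightarrow> K \<le> K' \<longrightarrow> Q x K'"
  shows "\<exists>K::nat. \<forall>x\<in>X. Q x K"
  using assms
proof (induction X rule: finite_induct)
  case empty then show ?case by simp
next
  case (insert y F)
  obtain K1 where K1: "\<forall>x\<in>F. Q x K1" using insert by blast
  obtain K2 where K2: "Q y K2" using insert.prems(1) by blast
  have "\<forall>x\<in>insert y F. Q x (max K1 K2)"
  proof
    fix x assume "x \<in> insert y F"
    then show "Q x (max K1 K2)"
    proof
      assume "x = y" then show ?thesis using K2 insert.prems(2) by (meson max.cobounded2)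
    next
      assume "x \<in> F" then show ?thesis using K1 insert.prems(2) by (meson max.cobounded1)
    qed
  qed
  then show ?case by blast
qed

lemma ivt_nat: "\<not> P n \<Longrightarrow> P m \<Longrightarrow> n \<le> m \<Longrightarrow> \<exists>a. n \<le> a \<and> a < m \<and> \<not> P a \<and> P (Suc a)"
proof (induction m)
  case 0 then show ?case by simp
next
  case (Suc m)
  show ?case
  proof (cases "P m \<and> n \<le> m")
    case True
    then obtain a where "n \<le> a \<and> a < m \<and> \<not> P a \<and> P (Suc a)" using Suc.IH Suc.prems(1) by blast
    then show ?thesis by (intro exI[of _ a]) simp
  next
    case False
    then have "n \<le> m" "\<not> P m"
      using Suc.prems by (metis le_SucE)+
    then show ?thesis using Suc.prems(2) by (intro exI[of _ m]) simp
  qed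
qed

context ctx begin

lemma core_contra:
  assumes j: "i0 < j" and XZ: "X \<inter> Sep i0 \<subseteq> B (R j)" and XU: "X \<inter> Up i0 = {}"
    and KX: "K \<subseteq> V - X" and cl: "\<forall>u w. u \<in> K \<longrightarrow> w \<in> V - X \<longrightarrow> E u w \<longrightarrow> w \<in> K"
    and H4: "\<forall>k\<ge>i0. card (Sep i0) \<le> card (Sep k)"
    and w: "w \<in> Sep i0" "w \<notin> X" and big: "card (Sep i0) < card (B (R j))"
    and b1: "b1 \<in> B (R j)" "b1 \<in> K" and b2: "b2 \<in> B (R j)" "b2 \<notin> X" "b2 \<notin> K"
  shows False
proof -
  define m where "m = card (Sep i0)"
  define F where "F = X \<inter> Sep i0"
  define Q where "Q = B (R j)"
  have fS: "finite (Sep i0)" using finB[OF RN] unfolding Sep_def by blast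
  have fQ: "finite Q" unfolding Q_def using finB[OF RN] .
  have FS: "F \<subset> Sep i0" unfolding F_def using w by blast
  have fF: "finite F" using FS fS finite_subset by blast
  have cF: "card F < m" unfolding m_def using psubset_card_mono[OF fS FS] .
  have b1F: "b1 \<notin> F" "b1 \<notin> X" using b1 KX unfolding F_def by auto
  have b2F: "b2 \<notin> F" using b2 unfolding F_def by auto
  have b12: "b1 \<noteq> b2" using b1 b2 by blast
  have FQ: "F \<subseteq> Q" unfolding F_def Q_def using XZ by blast
  have sub: "F \<union> {b1, b2} \<subseteq> Q" using FQ b1 b2 unfolding Q_def by blast
  have cFb: "card (F \<union> {b1, b2}) = card F + 2"
    using fF b1F b2F b12 by (simp add: card_insert_if)
  have cQ': "card (Q - (F \<union> {b1, b2})) = card Q - (card F + 2)"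
    using card_Diff_subset[OF finite_subset[OF sub fQ] sub] cFb by simp
  have "m - 1 - card F \<le> card (Q - (F \<union> {b1, b2}))"
    using cQ' big cF unfolding m_def Q_def by linarith
  then obtain W where W: "W \<subseteq> Q - (F \<union> {b1, b2})" "card W = m - 1 - card F" "finite W"
    by (rule obtain_subset_with_card_n)
  have FW: "F \<inter> W = {}" using W by blast
  have cFW: "card (F \<union> W) = m - 1" using card_Un_disjoint[OF fF W(3) FW] W(2) cF by simp
  have fFW: "finite (F \<union> W)" using fF W(3) by simp
  have nb1: "b1 \<notin> F \<union> W" "b2 \<notin> F \<union> W" using W b1F b2F by auto
  have c1: "card (insert b1 (F \<union> W)) = card (Sep i0)"
    using nb1 fFW cFW cF unfolding m_def by simp
  have c2: "card (insert b2 (F \<union> W)) = card (Sep i0)"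
    using nb1 fFW cFW cF unfolding m_def by simp
  have s1: "insert b1 (F \<union> W) \<subseteq> B (R j)" using FQ W b1 unfolding Q_def by blast
  have s2: "insert b2 (F \<union> W) \<subseteq> B (R j)" using FQ W b2 unfolding Q_def by blast
  have x1: "X \<inter> Sep i0 \<subseteq> insert b1 (F \<union> W)" unfolding F_def by blast
  have x2: "X \<inter> Sep i0 \<subseteq> insert b2 (F \<union> W)" unfolding F_def by blast
  have e1: "card (Sep i0 \<inter> K) = card (insert b1 (F \<union> W) \<inter> K)"
    by (rule core_count[OF j s1 c1 x1 XU KX cl H4])
  have e2: "card (Sep i0 \<inter> K) = card (insert b2 (F \<union> W) \<inter> K)"
    by (rule core_count[OF j s2 c2 x2 XU KX cl H4])
  have "insert b1 (F \<union> W) \<inter> K = insert b1 ((F \<union> W) \<inter> K)" using b1 by blast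
  moreover have "insert b2 (F \<union> W) \<inter> K = (F \<union> W) \<inter> K" using b2 by blast
  moreover have "finite ((F \<union> W) \<inter> K)" using fFW by simp
  moreover have "b1 \<notin> (F \<union> W) \<inter> K" using nb1 by blast
  ultimately show False using e1 e2 by simp
qed

lemma choose_i0:
  assumes fX: "finite X" and XV: "X \<subseteq> V" and J0: "\<forall>k\<ge>J0. Sep k - X \<noteq> {}"
  shows "\<exists>i0\<ge>J0. X \<inter> Up i0 = {} \<and> (\<forall>k\<ge>i0. card (Sep i0) \<le> card (Sep k))
     \<and> (\<forall>j\<ge>i0. X \<inter> Sep i0 \<subseteq> B (R j)) \<and> Sep i0 - X \<noteq> {}"
proof -
  let ?Q = "\<lambda>x K. (\<forall>k\<ge>K. x \<notin> Up k) \<and> ((\<forall>k\<ge>K. x \<in> B (R k)) \<or> (\<forall>k\<ge>K. x \<notin> B (R k)))"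
  have ex: "\<forall>x\<in>X. \<exists>K. ?Q x K"
  proof
    fix x assume "x \<in> X"
    then have xV: "x \<in> V" using XV by blast
    obtain K1 where K1: "\<forall>k\<ge>K1. x \<notin> Up k" using ev_notUp[OF xV] by blast
    obtain K2 where K2: "(\<forall>k\<ge>K2. x \<in> B (R k)) \<or> (\<forall>k\<ge>K2. x \<notin> B (R k))" using stab by blast
    have "?Q x (max K1 K2)" using K1 K2 by auto
    then show "\<exists>K. ?Q x K" by blast
  qed
  have mono: "\<forall>x K K'. ?Q x K \<longrightarrow> K \<le> K' \<longrightarrow> ?Q x K'" by auto
  obtain K where K: "\<forall>x\<in>X. ?Q x K" using fin_bound[OF fX ex mono] by blast
  define i1 where "i1 = max J0 K"
  obtain i0 where i0: "i1 \<le> i0" "\<forall>y. i1 \<le> y \<longrightarrow> card (Sep i0) \<le> card (Sep y)"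
    using ex_has_least_nat[of "\<lambda>k. i1 \<le> k" i1 "\<lambda>k. card (Sep k)"] by auto
  have "J0 \<le> i0" "K \<le> i0" using i0(1) unfolding i1_def by auto
  have a: "X \<inter> Up i0 = {}" using K \<open>K \<le> i0\<close> by blast
  have b: "\<forall>k\<ge>i0. card (Sep i0) \<le> card (Sep k)" using i0 by auto
  have c: "\<forall>j\<ge>i0. X \<inter> Sep i0 \<subseteq> B (R j)"
  proof (intro allI impI subsetI)
    fix j x assume j: "i0 \<le> j" and x: "x \<in> X \<inter> Sep i0"
    then have "x \<in> B (R i0)" unfolding Sep_def by blast
    then show "x \<in> B (R j)" using K x j \<open>K \<le> i0\<close> by fastforce
  qed
  have d: "Sep i0 - X \<noteq> {}" using J0 \<open>J0 \<le> i0\<close> by blast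
  show ?thesis using a b c d \<open>J0 \<le> i0\<close> by blast
qed

end


context ctx begin

lemma arises': assumes "arises_from V E N A B r \<epsilon> R"
  shows "\<forall>S\<in>\<epsilon>. \<forall>n. finite {k. S k \<in> B (R n)}"
    "\<forall>n. endcomp V E (B (R n)) \<epsilon> \<subseteq> Up n"
proof -
  show "\<forall>S\<in>\<epsilon>. \<forall>n. finite {k. S k \<in> B (R n)}" using assms unfolding arises_from_def by blast
  have "\<forall>n. tlt N A r (R n) (R (Suc n)) \<longrightarrow> endcomp V E (B (R n)) \<epsilon> \<subseteq> up N A B r (R n) (R (Suc n))"
    using assms unfolding arises_from_def by blast
  then show "\<forall>n. endcomp V E (B (R n)) \<epsilon> \<subseteq> Up n" using tlt_R unfolding Up_def by blast
qed

lemma tail_Up: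
  assumes en: "is_end V E \<epsilon>" and ar: "arises_from V E N A B r \<epsilon> R" and S: "S \<in> \<epsilon>"
  shows "\<exists>M. \<forall>k\<ge>M. S k \<in> Up j"
proof -
  let ?X = "B (R j)"
  have fX: "finite ?X" using finB[OF RN] .
  have XV: "?X \<subseteq> V" using BV[OF RN] .
  have rS: "ray V E S" using end_ray[OF en S] .
  have "finite {k. S k \<in> ?X}" using arises'(1)[OF ar] S by blast
  then obtain M0 where M0: "\<forall>k\<in>{k. S k \<in> ?X}. k < M0" using finite_nat_set_iff_bounded by blast
  have M0': "\<forall>k\<ge>M0. S k \<notin> ?X" using M0 by force
  have "S k \<in> endcomp V E ?X \<epsilon>" if k: "k \<ge> M0" for k
    unfolding endcomp_def
  proof (intro CollectI conjI ballI)
    show "S k \<in> V - ?X" using rS M0' k unfolding ray_def by blast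
    fix S' assume S': "S' \<in> \<epsilon>"
    have "ray_equiv V E S S'" using end_equiv[OF gr en S S'] .
    then have "\<exists>n m. (\<forall>k\<ge>n. S k \<notin> ?X) \<and> (\<forall>k\<ge>m. S' k \<notin> ?X) \<and> conn (V - ?X) E (S n) (S' m)"
      using fX XV unfolding ray_equiv_def by simp
    then obtain n m where nm: "\<forall>k\<ge>n. S k \<notin> ?X" "\<forall>k\<ge>m. S' k \<notin> ?X" "conn (V - ?X) E (S n) (S' m)"
      by blast
    have t: "\<forall>k\<ge>min n M0. S k \<notin> ?X" using nm(1) M0' by (simp add: min_def)
    have "conn (V - ?X) E (S n) (S k)" using ray_conn[OF gr rS t] k by simp
    then have c: "conn (V - ?X) E (S' m) (S k)"
      using conn_trans[OF conn_sym_g[OF gr nm(3)]] by blast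
    show "\<exists>n. (\<forall>k\<ge>n. S' k \<notin> ?X) \<and> conn (V - ?X) E (S' n) (S k)"
      by (rule exI[of _ m]) (use nm(2) c in simp)
  qed
  then show ?thesis using arises'(2)[OF ar] by blast
qed

lemma cross_ex:
  assumes en: "is_end V E \<epsilon>" and ar: "arises_from V E N A B r \<epsilon> R" and S: "S \<in> \<epsilon>"
  shows "\<exists>J. \<forall>j\<ge>J. \<exists>a\<ge>Nn. S a \<in> Sep j"
proof -
  have rS: "ray V E S" using end_ray[OF en S] .
  have "S Nn \<in> V" using rS unfolding ray_def by blast
  then obtain J where J: "\<forall>j\<ge>J. S Nn \<notin> Up j" using ev_notUp by blast
  have "\<exists>a\<ge>Nn. S a \<in> Sep j" if j: "j \<ge> J" for j
  proof -
    obtain M where M: "\<forall>k\<ge>M. S k \<in> Up j" using tail_Up[OF en ar S] by blast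
    have "S (max M Nn) \<in> Up j" using M by simp
    moreover have "S Nn \<notin> Up j" using J j by blast
    ultimately obtain a where a: "Nn \<le> a" "\<not> S a \<in> Up j" "S (Suc a) \<in> Up j"
      using ivt_nat[of "\<lambda>k. S k \<in> Up j" Nn "max M Nn"] by auto
    have "E (S a) (S (Suc a))" using rS unfolding ray_def by blast
    then have "S a \<in> Sep j" using sep a by blast
    then show ?thesis using a(1) by blast
  qed
  then show ?thesis by blast
qed

lemma big_bag:
  assumes en: "is_end V E \<epsilon>" and ar: "arises_from V E N A B r \<epsilon> R" and S: "S \<in> \<epsilon>"
    and H: "\<forall>k\<ge>i0. m \<le> card (Sep k)"
  shows "\<exists>j\<ge>J. m < card (B (R j))"
proof (rule ccontr)
  assume "\<not> (\<exists>j\<ge>J. m < card (B (R j)))"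
  then have sm: "\<forall>j\<ge>J. card (B (R j)) \<le> m" by auto
  define J' where "J' = max J i0"
  have bstep: "B (R (Suc j)) = B (R j)" if j: "j \<ge> J'" for j
  proof -
    have f1: "finite (B (R j))" "finite (B (R (Suc j)))" using finB[OF RN] by auto
    have s1: "Sep j \<subseteq> B (R j)" "Sep j \<subseteq> B (R (Suc j))" unfolding Sep_def by auto
    have "m \<le> card (Sep j)" using H j unfolding J'_def by auto
    moreover have "card (B (R j)) \<le> m" "card (B (R (Suc j))) \<le> m" using sm j unfolding J'_def by auto
    moreover have "card (Sep j) \<le> card (B (R j))" "card (Sep j) \<le> card (B (R (Suc j)))"
      using card_mono[OF f1(1) s1(1)] card_mono[OF f1(2) s1(2)] by auto
    ultimately have "card (Sep j) = card (B (R j))" "card (Sep j) = card (B (R (Suc j)))" by auto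
    then have "Sep j = B (R j)" "Sep j = B (R (Suc j))"
      using card_subset_eq[OF f1(1) s1(1)] card_subset_eq[OF f1(2) s1(2)] by auto
    then show ?thesis by simp
  qed
  have const: "B (R j) = B (R J')" if "j \<ge> J'" for j
    using that
  proof (induction j rule: dec_induct)
    case base then show ?case by simp
  next
    case (step j) then show ?case using bstep[of j] by simp
  qed
  have fin: "finite {k. S k \<in> B (R J')}" using arises'(1)[OF ar] S by blast
  have "\<exists>a\<in>{k. S k \<in> B (R J')}. Nn \<le> a" for Nn
  proof -
    obtain J1 where J1: "\<forall>j\<ge>J1. \<exists>a\<ge>Nn. S a \<in> Sep j" using cross_ex[OF en ar S] by blast
    have "\<exists>a\<ge>Nn. S a \<in> Sep (max J1 J')" using J1 by simp
    then obtain a where a: "a \<ge> Nn" "S a \<in> Sep (max J1 J')" by blast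
    have "S a \<in> B (R (max J1 J'))" using a(2) unfolding Sep_def by blast
    then have "S a \<in> B (R J')" using const[of "max J1 J'"] by simp
    then show ?thesis using a(1) by blast
  qed
  then show False using fin by (meson finite_nat_set_iff_bounded_le not_less_eq_eq)
qed

end


context ctx begin

lemma Sep_V: "Sep k \<subseteq> V" using BV[OF RN] unfolding Sep_def by blast

lemma L_sub_Dom:
  assumes en: "is_end V E \<epsilon>" and ar: "arises_from V E N A B r \<epsilon> R"
    and n0: "\<forall>i\<ge>n0. v \<in> Sep i"
  shows "v \<in> Dom V E \<epsilon>"
  unfolding Dom_def
proof (intro CollectI allI impI)
  fix X assume X: "finite X \<and> X \<subseteq> V - {v}"
  have vV: "v \<in> V" using n0 Sep_V by blast
  have vX: "v \<notin> X" using X by blast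
  have XV: "X \<subseteq> V" using X by blast
  show "v \<in> endcomp V E X \<epsilon>"
  proof (rule ccontr)
    assume nv: "v \<notin> endcomp V E X \<epsilon>"
    have "\<not> (\<forall>S\<in>\<epsilon>. \<exists>n. (\<forall>k\<ge>n. S k \<notin> X) \<and> conn (V - X) E (S n) v)"
      using nv vV vX unfolding endcomp_def by simp
    then obtain S where S: "S \<in> \<epsilon>" and nS: "\<not> (\<exists>n. (\<forall>k\<ge>n. S k \<notin> X) \<and> conn (V - X) E (S n) v)"
      by blast
    have rS: "ray V E S" using end_ray[OF en S] .
    define K where "K = {u. conn (V - X) E v u}"
    have KX: "K \<subseteq> V - X"
    proof
      fix u assume "u \<in> K"
      then have "conn (V - X) E v u" unfolding K_def by simp
      then have "v \<in> V - X \<and> u \<in> V - X" by (rule conn_in)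
      then show "u \<in> V - X" by simp
    qed
    have cl: "\<forall>u w. u \<in> K \<longrightarrow> w \<in> V - X \<longrightarrow> E u w \<longrightarrow> w \<in> K"
    proof (intro allI impI)
      fix u w assume "u \<in> K" "w \<in> V - X" "E u w"
      then have "conn (V - X) E v u" unfolding K_def by simp
      then have "conn (V - X) E v w" by (rule conn_edge) fact+
      then show "w \<in> K" unfolding K_def by simp
    qed
    have "v \<in> V - X" using vV vX by simp
    then have vK: "v \<in> K" unfolding K_def using conn_refl[of v "V - X" E] by simp
    obtain nX where nX: "\<forall>k\<ge>nX. S k \<notin> X" using ray_tail[OF rS] X by blast
    have SK: "S a \<notin> K" if "a \<ge> nX" for a
    proof
      assume "S a \<in> K"
      then have "conn (V - X) E v (S a)" unfolding K_def by simp
      then have "conn (V - X) E (S a) v" by (rule conn_sym_g[OF gr])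
      moreover have "\<forall>k\<ge>a. S k \<notin> X" using nX that by simp
      ultimately show False using nS by blast
    qed
    have J0: "\<forall>k\<ge>n0. Sep k - X \<noteq> {}" using n0 vX by blast
    obtain i0 where i0: "i0 \<ge> n0" "X \<inter> Up i0 = {}" "\<forall>k\<ge>i0. card (Sep i0) \<le> card (Sep k)"
      "\<forall>j\<ge>i0. X \<inter> Sep i0 \<subseteq> B (R j)" "Sep i0 - X \<noteq> {}"
      using choose_i0[OF _ XV J0] X by blast
    obtain JC where JC: "\<forall>j\<ge>JC. \<exists>a\<ge>nX. S a \<in> Sep j" using cross_ex[OF en ar S] by blast
    obtain j where j: "j \<ge> max (Suc i0) JC" "card (Sep i0) < card (B (R j))"
      using big_bag[OF en ar S i0(3)] by blast
    have "\<exists>a\<ge>nX. S a \<in> Sep j" using JC j(1) by simp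
    then obtain a where a: "a \<ge> nX" "S a \<in> Sep j" by blast
    have w: "v \<in> Sep i0" "v \<notin> X" using n0 i0(1) vX by auto
    have b1: "v \<in> B (R j)" using n0 i0(1) j(1) unfolding Sep_def by auto
    have b2: "S a \<in> B (R j)" "S a \<notin> X" "S a \<notin> K" using a nX SK unfolding Sep_def by auto
    have ij: "i0 < j" using j(1) by simp
    have XZ: "X \<inter> Sep i0 \<subseteq> B (R j)" using i0(4) ij by simp
    show False by (rule core_contra[OF ij XZ i0(2) KX cl i0(3) w j(2) b1 vK b2])
  qed
qed

lemma Dom_sub_L:
  assumes en: "is_end V E \<epsilon>" and ar: "arises_from V E N A B r \<epsilon> R"
    and v: "v \<in> Dom V E \<epsilon>"
  shows "\<exists>n0. \<forall>i\<ge>n0. v \<in> Sep i"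
proof -
  have dv: "\<forall>X. finite X \<and> X \<subseteq> V - {v} \<longrightarrow> v \<in> endcomp V E X \<epsilon>" using v unfolding Dom_def by blast
  have "v \<in> endcomp V E {} \<epsilon>" using dv by simp
  then have vV: "v \<in> V" unfolding endcomp_def by blast
  obtain K1 where K1: "(\<forall>k\<ge>K1. v \<in> B (R k)) \<or> (\<forall>k\<ge>K1. v \<notin> B (R k))" using stab by blast
  obtain K2 where K2: "\<forall>k\<ge>K2. v \<notin> Up k" using ev_notUp[OF vV] by blast
  show ?thesis
  proof (cases "\<forall>k\<ge>K1. v \<in> B (R k)")
    case True
    then have "\<forall>i\<ge>K1. v \<in> Sep i" unfolding Sep_def by simp
    then show ?thesis by blast
  next
    case False
    then have out: "\<forall>k\<ge>K1. v \<notin> B (R k)" using K1 by blast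
    define k where "k = max K1 K2"
    have "v \<notin> B (R k)" using out unfolding k_def by simp
    moreover have "finite (B (R k))" "B (R k) \<subseteq> V" using finB[OF RN] BV[OF RN] by auto
    ultimately have "v \<in> endcomp V E (B (R k)) \<epsilon>" using dv by blast
    then have "v \<in> Up k" using arises'(2)[OF ar] by blast
    then show ?thesis using K2 unfolding k_def by simp
  qed
qed

lemma uniq_end:
  assumes en1: "is_end V E \<epsilon>1" and ar1: "arises_from V E N A B r \<epsilon>1 R"
    and en2: "is_end V E \<epsilon>2" and ar2: "arises_from V E N A B r \<epsilon>2 R"
  shows "\<epsilon>1 = \<epsilon>2"
proof -
  obtain S1 where S1: "S1 \<in> \<epsilon>1" using end_mem[OF en1] by blast
  obtain S2 where S2: "S2 \<in> \<epsilon>2" using end_mem[OF en2] by blast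
  have r1: "ray V E S1" using end_ray[OF en1 S1] .
  have r2: "ray V E S2" using end_ray[OF en2 S2] .
  have "ray_equiv V E S1 S2"
    unfolding ray_equiv_def
  proof (intro allI impI)
    fix X assume X: "finite X \<and> X \<subseteq> V"
    show "\<exists>n m. (\<forall>k\<ge>n. S1 k \<notin> X) \<and> (\<forall>k\<ge>m. S2 k \<notin> X) \<and> conn (V - X) E (S1 n) (S2 m)"
    proof (rule ccontr)
      assume nc: "\<not> ?thesis"
      obtain n1 where n1: "\<forall>k\<ge>n1. S1 k \<notin> X" using ray_tail[OF r1] X by blast
      obtain n2 where n2: "\<forall>k\<ge>n2. S2 k \<notin> X" using ray_tail[OF r2] X by blast
      define K where "K = {u. conn (V - X) E (S1 n1) u}"
      have KX: "K \<subseteq> V - X"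
      proof
        fix u assume "u \<in> K"
        then have "conn (V - X) E (S1 n1) u" unfolding K_def by simp
        then have "S1 n1 \<in> V - X \<and> u \<in> V - X" by (rule conn_in)
        then show "u \<in> V - X" by simp
      qed
      have cl: "\<forall>u w. u \<in> K \<longrightarrow> w \<in> V - X \<longrightarrow> E u w \<longrightarrow> w \<in> K"
      proof (intro allI impI)
        fix u w assume "u \<in> K" "w \<in> V - X" "E u w"
        then have "conn (V - X) E (S1 n1) u" unfolding K_def by simp
        then have "conn (V - X) E (S1 n1) w" by (rule conn_edge) fact+
        then show "w \<in> K" unfolding K_def by simp
      qed
      have K1: "S1 a \<in> K" if "a \<ge> n1" for a
        unfolding K_def using ray_conn[OF gr r1 n1 _ that] by simp
      have K2: "S2 a \<notin> K" if "a \<ge> n2" for a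
      proof
        assume "S2 a \<in> K"
        then have "conn (V - X) E (S1 n1) (S2 a)" unfolding K_def by blast
        moreover have "\<forall>k\<ge>a. S2 k \<notin> X" using n2 that by simp
        ultimately show False using nc n1 by blast
      qed
      obtain J1 where J1: "\<forall>j\<ge>J1. \<exists>a\<ge>n1. S1 a \<in> Sep j" using cross_ex[OF en1 ar1 S1] by blast
      obtain J2 where J2: "\<forall>j\<ge>J2. \<exists>a\<ge>n2. S2 a \<in> Sep j" using cross_ex[OF en2 ar2 S2] by blast
      have J0: "\<forall>k\<ge>J1. Sep k - X \<noteq> {}"
      proof (intro allI impI)
        fix k assume "k \<ge> J1"
        then have "\<exists>a\<ge>n1. S1 a \<in> Sep k" using J1 by simp
        then show "Sep k - X \<noteq> {}" using n1 by blast
      qed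
      obtain i0 where i0: "i0 \<ge> J1" "X \<inter> Up i0 = {}" "\<forall>k\<ge>i0. card (Sep i0) \<le> card (Sep k)"
        "\<forall>j\<ge>i0. X \<inter> Sep i0 \<subseteq> B (R j)" "Sep i0 - X \<noteq> {}"
        using choose_i0[OF _ _ J0] X by blast
      obtain w where w: "w \<in> Sep i0" "w \<notin> X" using i0(5) by blast
      obtain j where j: "j \<ge> max (Suc i0) (max J1 J2)" "card (Sep i0) < card (B (R j))"
        using big_bag[OF en1 ar1 S1 i0(3)] by blast
      have "\<exists>a\<ge>n1. S1 a \<in> Sep j" using J1 j(1) by simp
      then obtain a1 where a1: "a1 \<ge> n1" "S1 a1 \<in> Sep j" by blast
      have "\<exists>a\<ge>n2. S2 a \<in> Sep j" using J2 j(1) by simp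
      then obtain a2 where a2: "a2 \<ge> n2" "S2 a2 \<in> Sep j" by blast
      have b1: "S1 a1 \<in> B (R j)" "S1 a1 \<in> K" using a1 K1 unfolding Sep_def by auto
      have b2: "S2 a2 \<in> B (R j)" "S2 a2 \<notin> X" "S2 a2 \<notin> K" using a2 n2 K2 unfolding Sep_def by auto
      have ij: "i0 < j" using j(1) by simp
      have XZ: "X \<inter> Sep i0 \<subseteq> B (R j)" using i0(4) ij by simp
      show False by (rule core_contra[OF ij XZ i0(2) KX cl i0(3) w j(2) b1 b2])
    qed
  qed
  then show ?thesis using end_eqI[OF gr en1 en2 S1 S2] by blast
qed

lemma liminf_eq: "liminf_sep B R = {v. \<exists>n0. \<forall>i\<ge>n0. v \<in> Sep i}"
  unfolding liminf_sep_def Sep_def by auto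

end

theorem lemma3p5:
  fixes V :: "'a set" and E :: "'a \<Rightarrow> 'a \<Rightarrow> bool"
    and N :: "'b set" and A :: "'b \<Rightarrow> 'b \<Rightarrow> bool" and B :: "'b \<Rightarrow> 'a set" and r :: 'b
  assumes "graph V E"
    and "tree_decomp V E N A B"
    and "finite_parts N B"
    and "lean V E N A B"
    and "r \<in> N"
  shows "(\<forall>R \<epsilon>1 \<epsilon>2. rooted_ray N A r R \<and> is_end V E \<epsilon>1 \<and> is_end V E \<epsilon>2
            \<and> arises_from V E N A B r \<epsilon>1 R \<and> arises_from V E N A B r \<epsilon>2 R \<longrightarrow> \<epsilon>1 = \<epsilon>2)
       \<and> (\<forall>R \<epsilon>. rooted_ray N A r R \<and> is_end V E \<epsilon> \<and> arises_from V E N A B r \<epsilon> R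
            \<longrightarrow> liminf_sep B R = Dom V E \<epsilon>)"
proof (intro conjI allI impI)
  fix R \<epsilon>1 \<epsilon>2
  assume h: "rooted_ray N A r R \<and> is_end V E \<epsilon>1 \<and> is_end V E \<epsilon>2
            \<and> arises_from V E N A B r \<epsilon>1 R \<and> arises_from V E N A B r \<epsilon>2 R"
  interpret c: ctx V E N A B r R using assms h by unfold_locales simp_all
  show "\<epsilon>1 = \<epsilon>2" using c.uniq_end h by blast
next
  fix R \<epsilon>
  assume h: "rooted_ray N A r R \<and> is_end V E \<epsilon> \<and> arises_from V E N A B r \<epsilon> R"
  interpret c: ctx V E N A B r R using assms h by unfold_locales simp_all
  have en: "is_end V E \<epsilon>" and ar: "arises_from V E N A B r \<epsilon> R" using h by auto
  show "liminf_sep B R = Dom V E \<epsilon>"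
    unfolding c.liminf_eq using c.L_sub_Dom[OF en ar] c.Dom_sub_L[OF en ar] by blast
qed

end
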